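(* Let $A$ be a complex vector space of dimension $n\ge2$, let $h$ be a symmetric bilinear form on $A$, let $c\in A$ with $h(c,c)=0$ and $h(\cdot,c)\neq0$, and define $x*y=-h(y,c)x+h(x,y)c$. Then $(A,* )$ is isomorphic to $A^{(k)}_{(5)}$ for some $k\in\{0,\dots,n-2\}$, where $A^{(k)}_{(5)}$ has basis $e_1,\dots,e_n$ and nonzero products of basis vectors $e_2e_1=-e_1$, $e_2e_2=e_2$, $e_je_2=e_j$ ($3\le j\le n$), $e_le_l=e_1$ ($3\le l\le k+2$). *)

theory Defs
  imports "HOL-Analysis.Analysis"
begin

text \<open>The n-dimensional complex vector space is modelled as complex^'n, n = CARD('n),
  with complex scalar multiplication (*s).\<close>

definition sym_bilinear_C :: "(complex^'n \<Rightarrow> complex^'n \<Rightarrow> complex) \<Rightarrow> bool" where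
  "sym_bilinear_C h \<longleftrightarrow>
     (\<forall>x y. h x y = h y x) \<and>
     (\<forall>x y z. h (x + y) z = h x z + h y z) \<and>
     (\<forall>a x z. h (a *s x) z = a * h x z)"

definition hc_mult :: "(complex^'n \<Rightarrow> complex^'n \<Rightarrow> complex) \<Rightarrow> complex^'n
    \<Rightarrow> complex^'n \<Rightarrow> complex^'n \<Rightarrow> complex^'n" where
  "hc_mult h c x y = (- h y c) *s x + (h x y) *s c"

definition A5_table :: "nat \<Rightarrow> (nat \<Rightarrow> complex^'n) \<Rightarrow> nat \<Rightarrow> nat \<Rightarrow> complex^'n" where
  "A5_table k e i j =
     (if i = 2 \<and> j = 1 then - e 1
      else if i = 2 \<and> j = 2 then e 2
      else if 3 \<le> i \<and> j = 2 then e i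
      else if i = j \<and> 3 \<le> i \<and> i \<le> k + 2 then e 1
      else 0)"

definition is_cbasis :: "nat \<Rightarrow> (nat \<Rightarrow> complex^'n) \<Rightarrow> bool" where
  "is_cbasis n e \<longleftrightarrow>
     inj_on e {1..n} \<and> vec.independent (e ` {1..n}) \<and> vec.span (e ` {1..n}) = UNIV"

text \<open>An algebra (complex^'n, mul) is isomorphic to A^(k)_(5) (of dimension n) iff it has a
  basis e_1..e_n whose products are given by the table of A^(k)_(5) (the isomorphism maps
  the defining basis of A^(k)_(5) to e; by bilinearity this determines all products).\<close>
definition iso_A5 :: "nat \<Rightarrow> nat \<Rightarrow> (complex^'n \<Rightarrow> complex^'n \<Rightarrow> complex^'n) \<Rightarrow> bool" where
  "iso_A5 n k mul \<longleftrightarrow>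
     (\<exists>e. is_cbasis n e \<and> (\<forall>i\<in>{1..n}. \<forall>j\<in>{1..n}. mul (e i) (e j) = A5_table k e i j))"

end

theory Submission
  imports Defs
begin

context fixes h :: "complex^'n \<Rightarrow> complex^'n \<Rightarrow> complex"
  assumes sb: "sym_bilinear_C h"
begin
lemma hsym: "h x y = h y x" using sb unfolding sym_bilinear_C_def by blast
lemma hadd_l[simp]: "h (x + y) z = h x z + h y z" using sb unfolding sym_bilinear_C_def by blast
lemma hscale_l[simp]: "h (a *s x) z = a * h x z" using sb unfolding sym_bilinear_C_def by blast
lemma hadd_r[simp]: "h z (x + y) = h z x + h z y" by (metis hsym hadd_l)
lemma hscale_r[simp]: "h z (a *s x) = a * h z x" by (metis hsym hscale_l)
lemma hzero_l[simp]: "h 0 z = 0" using hscale_l[of 0 0 z] by simp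
lemma hzero_r[simp]: "h z 0 = 0" by (metis hsym hzero_l)
lemma hneg_l[simp]: "h (- x) z = - h x z" using hscale_l[of "-1" x z] by simp
lemma hneg_r[simp]: "h z (- x) = - h z x" by (metis hsym hneg_l)
lemma hdiff_l[simp]: "h (x - y) z = h x z - h y z" by (metis diff_conv_add_uminus hadd_l hneg_l)
lemma hdiff_r[simp]: "h z (x - y) = h z x - h z y" by (metis hsym hdiff_l)

lemma polar: assumes "\<And>x. x \<in> W \<Longrightarrow> h x x = 0" "vec.subspace W" "x \<in> W" "y \<in> W"
  shows "h x y = 0"
proof -
  have "x + y \<in> W" using assms by (simp add: vec.subspace_add)
  hence "h (x+y) (x+y) = 0" using assms by blast
  hence "h x x + 2 * h x y + h y y = 0" by (simp add: hsym[of y x]) (simp add: algebra_simps)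
  thus ?thesis using assms by simp
qed

lemma diag:
  "vec.subspace W \<Longrightarrow> vec.dim W = m \<Longrightarrow> \<exists>fs k. distinct fs \<and> vec.independent (set fs) \<and>
     vec.span (set fs) = W \<and> k \<le> length fs \<and>
     (\<forall>i<length fs. \<forall>j<length fs. h (fs!i) (fs!j) = (if i = j \<and> i < k then 1 else 0))"
proof (induction m arbitrary: W rule: less_induct)
  case (less m W)
  show ?case
  proof (cases "\<forall>x\<in>W. h x x = 0")
    case True
    obtain B where B: "B \<subseteq> W" "vec.independent B" "W \<subseteq> vec.span B"
      using vec.basis_exists by blast
    have "finite B" using B vec.finiteI_independent by blast
    then obtain fs where fs: "set fs = B" "distinct fs" using finite_distinct_list by blast
    have sp: "vec.span B = W" using B less.prems vec.span_subspace by blast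
    show ?thesis
    proof (intro exI[of _ fs] exI[of _ 0] conjI allI impI)
      fix i j assume "i < length fs" "j < length fs"
      hence "fs!i \<in> W" "fs!j \<in> W" using fs B by auto
      thus "h (fs!i) (fs!j) = (if i = j \<and> i < 0 then 1 else 0)"
        using polar[of W] True less.prems by auto
    qed (use fs B sp in auto)
  next
    case False
    then obtain v where v: "v \<in> W" "h v v \<noteq> 0" by blast
    define v' where "v' = (1 / csqrt (h v v)) *s v"
    have v'1: "h v' v' = 1" unfolding v'_def using v(2)
      by (simp add: field_simps power2_eq_square[symmetric])
    have v'W: "v' \<in> W" unfolding v'_def using v less.prems by (simp add: vec.subspace_scale)
    define W' where "W' = {x \<in> W. h x v' = 0}"
    have subW': "vec.subspace W'" using less.prems(1) unfolding W'_def vec.subspace_def by auto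
    have v'nW': "v' \<notin> W'" using v'1 unfolding W'_def by auto
    have dec: "x - h x v' *s v' \<in> W'" if "x \<in> W" for x
      using that v'W less.prems v'1 unfolding W'_def by (auto simp: vec.subspace_diff vec.subspace_scale)
    have spi: "vec.span (insert v' W') = W"
    proof (rule vec.span_subspace)
      show "insert v' W' \<subseteq> W" using v'W W'_def by auto
      show "W \<subseteq> vec.span (insert v' W')"
      proof
        fix x assume x: "x \<in> W"
        have "x = (x - h x v' *s v') + h x v' *s v'" by simp
        moreover have "x - h x v' *s v' \<in> vec.span (insert v' W')"
          using dec[OF x] by (meson insertCI vec.span_base)
        moreover have "h x v' *s v' \<in> vec.span (insert v' W')"
          by (simp add: vec.span_base vec.span_scale)
        ultimately show "x \<in> vec.span (insert v' W')" by (metis vec.span_add)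
      qed
    qed (rule less.prems)
    have "vec.dim W = vec.dim W' + 1"
    proof -
      have "vec.dim W = vec.dim (insert v' W')" using spi vec.dim_span by metis
      also have "\<dots> = vec.dim W' + 1"
      proof -
        have "vec.span W' = W'" using subW' by simp
        hence "v' \<notin> vec.span W'" using v'nW' by metis
        thus ?thesis by (simp add: vec.dim_insert)
      qed
      finally show ?thesis .
    qed
    hence "vec.dim W' < m" using less.prems by simp
    then obtain gs k' where gs: "distinct gs" "vec.independent (set gs)" "vec.span (set gs) = W'"
      "k' \<le> length gs"
      "\<forall>i<length gs. \<forall>j<length gs. h (gs!i) (gs!j) = (if i = j \<and> i < k' then 1 else 0)"
      using less.IH[OF _ subW' refl] by blast
    have gsW': "set gs \<subseteq> W'" using gs(3) vec.span_superset by blast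
    have ngs: "v' \<notin> set gs" using gsW' v'nW' by blast
    show ?thesis
    proof (intro exI[of _ "v' # gs"] exI[of _ "Suc k'"] conjI allI impI)
      show "distinct (v' # gs)" using gs ngs by simp
      show "vec.independent (set (v' # gs))" using gs v'nW' by (simp add: vec.independent_insert ngs)
      show "vec.span (set (v' # gs)) = W"
      proof -
        have "vec.span (set (v' # gs)) = vec.span (insert v' (vec.span (set gs)))"
          unfolding vec.span_eq using vec.span_superset[of "set gs"] vec.span_superset[of "insert v' (set gs)"]
            vec.span_mono[of "set gs" "insert v' (set gs)"]
          by (auto intro: vec.span_base vec.span_mono[THEN subsetD])
        thus ?thesis using gs(3) spi by simp
      qed
      show "Suc k' \<le> length (v' # gs)" using gs by simp
      fix i j assume ij: "i < length (v' # gs)" "j < length (v' # gs)"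
      have orth: "h g v' = 0" "h v' g = 0" if "g \<in> set gs" for g
        using that gsW' W'_def hsym by auto
      show "h ((v' # gs) ! i) ((v' # gs) ! j) = (if i = j \<and> i < Suc k' then 1 else 0)"
      proof (cases i; cases j)
        fix i' j' assume "i = Suc i'" "j = Suc j'"
        thus ?thesis using gs(5) ij by auto
      qed (use v'1 orth ij in auto)
    qed
  qed
qed
end

lemma A5_goal:
  fixes e :: "nat \<Rightarrow> complex^'n" and c :: "complex^'n"
  assumes e1: "e 1 = c" "e (Suc 0) = c" and ij: "i \<in> {1..n}" "j \<in> {1..n}"
  shows "- (if j = 2 then - 1 else 0) *s e i +
     (if i = 1 \<and> j = 2 \<or> i = 2 \<and> j = 1 then - 1
      else if i = j \<and> 3 \<le> i \<and> i \<le> k + 2 then 1 else 0) *s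
     c =
     (if i = 2 \<and> j = 1 then - e 1
      else if i = 2 \<and> j = 2 then e 2
           else if 3 \<le> i \<and> j = 2 then e i
                else if i = j \<and> 3 \<le> i \<and> i \<le> k + 2 then e 1
                     else 0)"
proof -
  have di: "i = 1 \<or> i = 2 \<or> 3 \<le> i" using ij by auto
  show ?thesis using di
    apply (elim disjE)
      apply (simp_all add: e1 vector_smult_lneg)
    done
qed

theorem proposition3p8:
  fixes h :: "complex^'n \<Rightarrow> complex^'n \<Rightarrow> complex" and c :: "complex^'n"
  assumes "CARD('n) \<ge> 2"
    and "sym_bilinear_C h"
    and "h c c = 0" and "\<exists>x. h x c \<noteq> 0"
  shows "\<exists>k\<in>{0..CARD('n)-2}. iso_A5 CARD('n) k (hc_mult h c)"
proof -
  note sb = assms(2)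
  note [simp] = hadd_l[OF sb] hadd_r[OF sb] hscale_l[OF sb] hscale_r[OF sb] hzero_l[OF sb]
    hzero_r[OF sb] hneg_l[OF sb] hneg_r[OF sb] hdiff_l[OF sb] hdiff_r[OF sb] assms(3)
  have hs: "h x y = h y x" for x y using hsym[OF sb] .
  obtain u where hu: "h u c \<noteq> 0" using assms(4) by blast
  define u1 where "u1 = (-1 / h u c) *s u"
  have u1c: "h u1 c = -1" unfolding u1_def using hu by simp
  define e2 where "e2 = u1 + (h u1 u1 / 2) *s c"
  have e2c: "h e2 c = -1" unfolding e2_def using u1c by simp
  have ce2: "h c e2 = -1" using e2c hs by metis
  have e2e2: "h e2 e2 = 0" unfolding e2_def using u1c hs[of c u1] by (simp add: field_simps)
  define W where "W = {x. h x c = 0 \<and> h x e2 = 0}"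
  have subW: "vec.subspace W" unfolding W_def vec.subspace_def by auto
  obtain fs k where fs: "distinct fs" "vec.independent (set fs)" "vec.span (set fs) = W"
      "k \<le> length fs"
      "\<forall>i<length fs. \<forall>j<length fs. h (fs!i) (fs!j) = (if i = j \<and> i < k then 1 else 0)"
    using diag[OF sb subW refl] by blast
  have fsW: "set fs \<subseteq> W" using fs(3) vec.span_superset by blast
  have e2nW: "e2 \<notin> W" using e2c W_def by auto
  have cnW: "c \<notin> W" using ce2 W_def by auto
  have e2fs: "e2 \<notin> set fs" and cfs: "c \<notin> set fs" using fsW e2nW cnW by auto
  have ce2ne: "c \<noteq> e2" using e2c e2e2 by auto
  define S where "S = insert c (insert e2 (set fs))"
  have indS: "vec.independent S"
  proof -
    have i1: "vec.independent (insert e2 (set fs))"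
      using fs e2nW by (simp add: vec.independent_insert e2fs)
    have "c \<notin> vec.span (insert e2 (set fs))"
    proof
      assume "c \<in> vec.span (insert e2 (set fs))"
      then obtain t where "c - t *s e2 \<in> W" unfolding vec.span_insert fs(3) by blast
      hence "h (c - t *s e2) e2 = 0" unfolding W_def by blast
      thus False using ce2 e2e2 by simp
    qed
    thus ?thesis unfolding S_def using i1 by (simp add: vec.independent_insert)
  qed
  have spS: "vec.span S = UNIV"
  proof -
    { fix x :: "complex^'n"
      define p where "p = x + h x e2 *s c + h x c *s e2"
      have "p \<in> W" unfolding W_def p_def using ce2 e2c e2e2 by simp
      hence pS: "p \<in> vec.span S" using fs(3) vec.span_mono[of "set fs" S] S_def by auto
      have cS: "c \<in> vec.span S" and eS: "e2 \<in> vec.span S" unfolding S_def by (auto intro: vec.span_base)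
      have "x = p - h x e2 *s c - h x c *s e2" unfolding p_def by simp
      also have "\<dots> \<in> vec.span S" using pS cS eS by (intro vec.span_diff vec.span_scale)
      finally have "x \<in> vec.span S" . }
    thus ?thesis by auto
  qed
  have "card S = CARD('n)"
    using vec.dim_span_eq_card_independent[OF indS] spS vec_dim_card by metis
  moreover have "card S = length fs + 2"
    unfolding S_def using e2fs cfs ce2ne fs(1) by (simp add: distinct_card)
  ultimately have len: "length fs = CARD('n) - 2" by simp
  define n where "n = CARD('n)"
  define e where "e i = (if i = 1 then c else if i = 2 then e2 else fs!(i-3))" for i
  have e1: "e 1 = c" "e (Suc 0) = c" and e2': "e 2 = e2" by (simp_all add: e_def)
  have fsn: "i \<in> {3..n} \<Longrightarrow> i - 3 < length fs" for i using len assms(1) n_def by auto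
  have eimg: "e ` {1..n} = S"
  proof
    show "e ` {1..n} \<subseteq> S" unfolding S_def e_def using fsn by auto
    show "S \<subseteq> e ` {1..n}"
    proof
      fix x assume "x \<in> S"
      then consider "x = c" | "x = e2" | "x \<in> set fs" unfolding S_def by blast
      thus "x \<in> e ` {1..n}"
      proof cases
        case 1 thus ?thesis using assms(1) n_def by (auto simp: e_def image_iff intro!: bexI[of _ 1])
      next
        case 2 thus ?thesis using assms(1) n_def ce2ne by (auto simp: e_def image_iff intro!: bexI[of _ 2])
      next
        case 3
        then obtain m where m: "m < length fs" "x = fs!m" by (metis in_set_conv_nth)
        thus ?thesis using len n_def by (auto simp: e_def image_iff intro!: bexI[of _ "m+3"])
      qed
    qed
  qed
  have inj: "inj_on e {1..n}"
  proof (rule inj_onI)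
    fix i j assume ij: "i \<in> {1..n}" "j \<in> {1..n}" "e i = e j"
    have nth_fs: "fs!(m-3) \<in> set fs" if "m \<in> {3..n}" for m using fsn[OF that] by simp
    show "i = j"
    proof (cases "i \<le> 2"; cases "j \<le> 2")
      assume "\<not> i \<le> 2" "\<not> j \<le> 2"
      thus ?thesis using ij fs(1) fsn[of i] fsn[of j] by (auto simp: e_def nth_eq_iff_index_eq)
    qed (use ij ce2ne e2fs cfs nth_fs in \<open>auto simp: e_def le_Suc_eq numeral_2_eq_2 split: if_splits\<close>)
  qed
  have he: "h (e i) (e j) = (if (i = 1 \<and> j = 2) \<or> (i = 2 \<and> j = 1) then -1
      else if i = j \<and> 3 \<le> i \<and> i \<le> k + 2 then 1 else 0)"
    if "i \<in> {1..n}" "j \<in> {1..n}" for i j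
  proof -
    have W3: "h (e m) c = 0 \<and> h (e m) e2 = 0 \<and> h c (e m) = 0 \<and> h e2 (e m) = 0" if "m \<in> {3..n}" for m
      using fsW fsn[OF that] that hs unfolding e_def W_def by (auto dest!: nth_mem)
    have di: "i = 1 \<or> i = 2 \<or> i \<in> {3..n}" and dj: "j = 1 \<or> j = 2 \<or> j \<in> {3..n}"
      using that by auto
    show ?thesis
    proof (cases "i \<in> {3..n} \<and> j \<in> {3..n}")
      case True
      thus ?thesis using fs(5) fsn[of i] fsn[of j] by (auto simp: e_def)
    next
      case False
      show ?thesis
      proof (cases "i \<in> {3..n}")
        case True
        hence "j = 1 \<or> j = 2" using False dj by blast
        thus ?thesis using W3[OF True] True by (auto simp: e1 e2')
      next
        case F2: False
        hence "i = 1 \<or> i = 2" using di by blast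
        moreover have "j \<in> {3..n} \<Longrightarrow> h c (e j) = 0 \<and> h e2 (e j) = 0" using W3 by blast
        ultimately show ?thesis using dj e2c ce2 e2e2 F2 assms(3) by (auto simp: e1 e2')
      qed
    qed
  qed
  have hc: "h (e i) c = (if i = 2 then -1 else 0)" if "i \<in> {1..n}" for i
    using he[OF that, of 1] that n_def assms(1) by (simp add: e1 split: if_splits)
  have "iso_A5 n k (hc_mult h c)"
    unfolding iso_A5_def
  proof (intro exI[of _ e] conjI ballI)
    show "is_cbasis n e" unfolding is_cbasis_def using inj eimg indS spS by simp
    fix i j assume ij: "i \<in> {1..n}" "j \<in> {1..n}"
    have c1: "c = e 1" by (simp add: e_def)
    show "hc_mult h c (e i) (e j) = A5_table k e i j"
      unfolding hc_mult_def A5_table_def hc[OF ij(2)] he[OF ij]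
      by (rule A5_goal[OF e1 ij])
  qed
  thus ?thesis using len n_def fs(4) by auto
qed

end
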